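(* Let $H$ and $K$ be subgroups of a finite group $G$ such that $HK$ is a subgroup and $|H|_2=|H\cap K|_2$. Then $H\cap K$ is a perfect code of $K$ if and only if $H$ is a perfect code of $HK$.
   Context: $|X|_2$ denotes the largest power of $2$ dividing $|X|$. For a group $G$ with identity $e$ and an inverse-closed subset $S\subseteq G\setminus\{e\}$, the Cayley graph $\mathrm{Cay}(G,S)$ has vertex set $G$ and edges $\{g,sg\}$ for $s\in S$, $g\in G$. A perfect code in a graph is an independent set $C$ of vertices such that every vertex outside $C$ is adjacent to exactly one vertex of $C$. A subgroup $H$ of $G$ is a perfect code of $G$ if some Cayley graph of $G$ admits $H$ as a perfect code. *)

theory Defs
  imports "HOL-Algebra.Coset" "HOL-Computational_Algebra.Primes"
begin

definition two_part :: "nat \<Rightarrow> nat" where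
  "two_part n = 2 ^ multiplicity (2::nat) n"

definition cay_adj :: "('a, 'b) monoid_scheme \<Rightarrow> 'a set \<Rightarrow> 'a \<Rightarrow> 'a \<Rightarrow> bool" where
  "cay_adj G S x y \<longleftrightarrow> x \<in> carrier G \<and> y \<in> carrier G \<and>
     (\<exists>s\<in>S. y = s \<otimes>\<^bsub>G\<^esub> x \<or> x = s \<otimes>\<^bsub>G\<^esub> y)"

definition cay_perfect_code :: "('a, 'b) monoid_scheme \<Rightarrow> 'a set \<Rightarrow> 'a set \<Rightarrow> bool" where
  "cay_perfect_code G S C \<longleftrightarrow> C \<subseteq> carrier G \<and>
     (\<forall>x\<in>C. \<forall>y\<in>C. \<not> cay_adj G S x y) \<and>
     (\<forall>v\<in>carrier G - C. \<exists>!c. c \<in> C \<and> cay_adj G S v c)"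

definition subgroup_perfect_code :: "'a set \<Rightarrow> ('a, 'b) monoid_scheme \<Rightarrow> bool" where
  "subgroup_perfect_code H G \<longleftrightarrow> subgroup H G \<and>
     (\<exists>S. S \<subseteq> carrier G - {\<one>\<^bsub>G\<^esub>} \<and> (\<forall>s\<in>S. inv\<^bsub>G\<^esub> s \<in> S) \<and>
          cay_perfect_code G S H)"

end

theory Submission
  imports Defs
begin


lemma card_image_cong_eq:
  assumes "\<And>a b. a \<in> A \<Longrightarrow> b \<in> A \<Longrightarrow> f a = f b \<longleftrightarrow> g a = g b"
  shows "card (f ` A) = card (g ` A)"
proof -
  define h where "h = (\<lambda>y. g (SOME a. a \<in> A \<and> f a = y))"
  have hf: "h (f a) = g a" if "a \<in> A" for a
  proof -
    have ex: "\<exists>a'. a' \<in> A \<and> f a' = f a" using that by blast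
    have "(SOME a'. a' \<in> A \<and> f a' = f a) \<in> A \<and> f (SOME a'. a' \<in> A \<and> f a' = f a) = f a"
      by (rule someI_ex[OF ex])
    then show ?thesis unfolding h_def using assms that by blast
  qed
  have "bij_betw h (f ` A) (g ` A)"
  proof (rule bij_betw_imageI)
    show "inj_on h (f ` A)"
      by (auto simp: inj_on_def hf assms)
    show "h ` f ` A = g ` A"
      by (auto simp: hf image_iff)
  qed
  then show ?thesis by (rule bij_betw_same_card)
qed

lemma invol_even:
  "finite X \<Longrightarrow> (\<forall>x\<in>X. f x \<in> X \<and> f (f x) = x \<and> f x \<noteq> x) \<Longrightarrow> even (card X)"
proof (induction "card X" arbitrary: X rule: less_induct)
  case (less X)
  show ?case
  proof (cases "X = {}")
    case True then show ?thesis by simp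
  next
    case False
    then obtain x where x: "x \<in> X" by blast
    let ?X' = "X - {x, f x}"
    have fx: "f x \<in> X" "f x \<noteq> x" using less.prems x by auto
    have c: "card X = card ?X' + 2"
      proof -
      have s: "{x, f x} \<subseteq> X" using x fx by auto
      have "card {x, f x} = 2" using fx(2) by simp
      moreover have "card (X - {x, f x}) = card X - card {x, f x}"
        using card_Diff_subset[OF _ s] by simp
      moreover have "card {x, f x} \<le> card X" using card_mono[OF less.prems(1) s] .
      ultimately show ?thesis by linarith
    qed
    have "even (card ?X')"
    proof (rule less.hyps)
      show "card ?X' < card X" using c by simp
      show "finite ?X'" using less.prems by simp
      show "\<forall>y\<in>?X'. f y \<in> ?X' \<and> f (f y) = y \<and> f y \<noteq> y"
      proof
        fix y assume y: "y \<in> ?X'"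
        then have y1: "y \<in> X" "y \<noteq> x" "y \<noteq> f x" by auto
        have p: "f y \<in> X" "f (f y) = y" "f y \<noteq> y" using less.prems(2) y1(1) by auto
        have px: "f (f x) = x" using less.prems(2) x by auto
        have "f y \<noteq> x" using p(2) y1(3) by auto
        moreover have "f y \<noteq> f x" using p(2) px y1(2) by metis
        ultimately show "f y \<in> ?X' \<and> f (f y) = y \<and> f y \<noteq> y" using p by auto
      qed
    qed
    then show ?thesis using c by simp
  qed
qed

lemma invol_fixpoint:
  assumes "finite X" "\<And>x. x \<in> X \<Longrightarrow> f x \<in> X" "\<And>x. x \<in> X \<Longrightarrow> f (f x) = x" "odd (card X)"
  shows "\<exists>x\<in>X. f x = x"
  using invol_even[of X f] assms by blast

lemma card_remove2:
  assumes "finite W" "A \<in> W" "B \<in> W" "A \<noteq> B"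
  shows "card {C\<in>W. P C} = card {C\<in>W - {A,B}. P C} + (if P A then 1 else 0) + (if P B then 1 else 0)"
proof -
  have e: "{C\<in>W. P C} = {C\<in>W - {A,B}. P C} \<union> ({A,B} \<inter> {C. P C})" using assms by auto
  have "card ({C\<in>W - {A,B}. P C} \<union> ({A,B} \<inter> {C. P C})) = card {C\<in>W - {A,B}. P C} + card ({A,B} \<inter> {C. P C})"
    by (rule card_Un_disjoint) (use assms in auto)
  moreover have "card ({A,B} \<inter> {C. P C}) = (if P A then 1 else 0) + (if P B then 1 else 0)"
    using assms(4) by auto
  ultimately show ?thesis using e by simp
qed

lemma card_remove1:
  assumes "finite W" "A \<in> W"
  shows "card {C\<in>W. P C} = card {C\<in>W - {A}. P C} + (if P A then 1 else 0)"
proof -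
  have e: "{C\<in>W. P C} = {C\<in>W - {A}. P C} \<union> ({A} \<inter> {C. P C})" using assms by auto
  have "card ({C\<in>W - {A}. P C} \<union> ({A} \<inter> {C. P C})) = card {C\<in>W - {A}. P C} + card ({A} \<inter> {C. P C})"
    by (rule card_Un_disjoint) (use assms in auto)
  moreover have "card ({A} \<inter> {C. P C}) = (if P A then 1 else 0)"
    by auto
  ultimately show ?thesis using e by simp
qed

lemma odd_iff_mult0: "(n::nat) \<noteq> 0 \<Longrightarrow> odd n \<longleftrightarrow> multiplicity 2 n = 0"
  by (simp add: multiplicity_eq_zero_iff)

definition rc :: "('a, 'b) monoid_scheme \<Rightarrow> 'a set \<Rightarrow> 'a \<Rightarrow> 'a set" where
  "rc G J a = {t \<in> carrier G. t \<otimes>\<^bsub>G\<^esub> inv\<^bsub>G\<^esub> a \<in> J}"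

definition dcos :: "('a, 'b) monoid_scheme \<Rightarrow> 'a set \<Rightarrow> 'a \<Rightarrow> 'a set" where
  "dcos G J g = {a \<otimes>\<^bsub>G\<^esub> g \<otimes>\<^bsub>G\<^esub> b | a b. a \<in> J \<and> b \<in> J}"

definition nJ :: "('a, 'b) monoid_scheme \<Rightarrow> 'a set \<Rightarrow> 'a \<Rightarrow> 'a set" where
  "nJ G J x = {l \<in> J. x \<otimes>\<^bsub>G\<^esub> l \<otimes>\<^bsub>G\<^esub> inv\<^bsub>G\<^esub> x \<in> J}"

context group
begin

lemma gc1 [simp]: "x \<in> carrier G \<Longrightarrow> y \<in> carrier G \<Longrightarrow> x \<otimes> (inv x \<otimes> y) = y"
  by (simp add: m_assoc[symmetric])
lemma gc2 [simp]: "x \<in> carrier G \<Longrightarrow> y \<in> carrier G \<Longrightarrow> inv x \<otimes> (x \<otimes> y) = y"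
  by (simp add: m_assoc[symmetric])

lemmas gs = m_assoc inv_mult_group

end


context group
begin

lemmas gsimp = m_assoc inv_mult_group r_inv l_inv r_one l_one inv_inv gc1 gc2

lemma rc_mem: "t \<in> rc G J a \<longleftrightarrow> t \<in> carrier G \<and> t \<otimes> inv a \<in> J"
  by (simp add: rc_def)

lemma rc_self: "subgroup J G \<Longrightarrow> a \<in> carrier G \<Longrightarrow> a \<in> rc G J a"
  by (simp add: rc_def subgroup.one_closed)

lemma rc_carrier: "rc G J a \<subseteq> carrier G"
  by (auto simp: rc_def)

lemma rc_eq:
  assumes J: "subgroup J G" and a: "a \<in> carrier G" and b: "b \<in> carrier G"
  shows "rc G J a = rc G J b \<longleftrightarrow> a \<otimes> inv b \<in> J"
proof
  assume "rc G J a = rc G J b"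
  then have "a \<in> rc G J b" using rc_self[OF J a] by simp
  then show "a \<otimes> inv b \<in> J" by (simp add: rc_def)
next
  assume ab: "a \<otimes> inv b \<in> J"
  have Jc: "J \<subseteq> carrier G" by (rule subgroup.subset[OF J])
  show "rc G J a = rc G J b"
  proof (rule Set.set_eqI)
    fix t
    show "t \<in> rc G J a \<longleftrightarrow> t \<in> rc G J b"
    proof (cases "t \<in> carrier G")
      case True
      have e1: "t \<otimes> inv b = (t \<otimes> inv a) \<otimes> (a \<otimes> inv b)" using True a b by (simp add: gsimp)
      have e2: "t \<otimes> inv a = (t \<otimes> inv b) \<otimes> inv (a \<otimes> inv b)" using True a b by (simp add: gsimp)
      have "t \<otimes> inv a \<in> J \<Longrightarrow> t \<otimes> inv b \<in> J" unfolding e1 using ab J by (simp add: subgroup.m_closed)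
      moreover have "t \<otimes> inv b \<in> J \<Longrightarrow> t \<otimes> inv a \<in> J" unfolding e2 using ab J by (simp add: subgroup.m_closed subgroup.m_inv_closed)
      ultimately show ?thesis unfolding rc_mem using True by blast
    next
      case False then show ?thesis by (simp add: rc_def)
    qed
  qed
qed

lemma rc_eq2:
  assumes J: "subgroup J G" and a: "a \<in> carrier G" and b: "b \<in> carrier G"
    and "t \<in> rc G J a" "t \<in> rc G J b"
  shows "rc G J a = rc G J b"
proof -
  have t: "t \<in> carrier G" "t \<otimes> inv a \<in> J" "t \<otimes> inv b \<in> J" using assms by (auto simp: rc_def)
  have "a \<otimes> inv b = inv (t \<otimes> inv a) \<otimes> (t \<otimes> inv b)" using t a b by (simp add: gsimp)
  then have "a \<otimes> inv b \<in> J" using t J by (simp add: subgroup.m_closed subgroup.m_inv_closed)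
  then show ?thesis using rc_eq[OF J a b] by simp
qed

lemma rc_subset:
  assumes J: "subgroup J G" and B: "subgroup B G" and JB: "J \<subseteq> B" and b: "b \<in> B"
  shows "rc G J b \<subseteq> B"
proof
  fix t assume t: "t \<in> rc G J b"
  have bc: "b \<in> carrier G" by (rule subgroup.mem_carrier[OF B b])
  have tc: "t \<in> carrier G" "t \<otimes> inv b \<in> J" using t by (auto simp: rc_def)
  have eq: "(t \<otimes> inv b) \<otimes> b = t" using tc bc by (simp add: gsimp)
  have "(t \<otimes> inv b) \<otimes> b \<in> B"
  proof -
    have "t \<otimes> inv b \<in> B" using tc(2) JB by blast
    then show ?thesis by (rule subgroup.m_closed[OF B _ b])
  qed
  then show "t \<in> B" by (simp only: eq)
qed

lemma card_rc:
  assumes J: "subgroup J G" and a: "a \<in> carrier G"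
  shows "card (rc G J a) = card J"
proof -
  have Jc: "J \<subseteq> carrier G" by (rule subgroup.subset[OF J])
  have e: "rc G J a = (\<lambda>j. j \<otimes> a) ` J"
  proof (rule Set.set_eqI)
    fix t
    show "t \<in> rc G J a \<longleftrightarrow> t \<in> (\<lambda>j. j \<otimes> a) ` J"
    proof
      assume "t \<in> rc G J a"
      then have tc: "t \<in> carrier G" "t \<otimes> inv a \<in> J" by (auto simp: rc_def)
      show "t \<in> (\<lambda>j. j \<otimes> a) ` J"
      proof (rule image_eqI[OF _ tc(2)])
        show "t = (t \<otimes> inv a) \<otimes> a" using tc a by (simp add: gsimp)
      qed
    next
      assume "t \<in> (\<lambda>j. j \<otimes> a) ` J"
      then obtain j where j: "j \<in> J" "t = j \<otimes> a" by blast
      have jc: "j \<in> carrier G" using j Jc by blast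
      have tcar: "t \<in> carrier G" using j(2) jc a by simp
      have "t \<otimes> inv a = j" unfolding j(2) using jc a by (simp add: gsimp)
      then have "t \<otimes> inv a \<in> J" using j(1) by simp
      then show "t \<in> rc G J a" using tcar by (simp add: rc_mem)
    qed
  qed
  have "inj_on (\<lambda>j. j \<otimes> a) J"
  proof (rule inj_onI)
    fix u v assume "u \<in> J" "v \<in> J" "u \<otimes> a = v \<otimes> a"
    moreover have "u \<in> carrier G" "v \<in> carrier G" using \<open>u \<in> J\<close> \<open>v \<in> J\<close> Jc by auto
    ultimately show "u = v" using a by simp
  qed
  then show ?thesis using e card_image by (simp add: card_image)
qed

lemma rcount:
  assumes A: "subgroup A G" and B: "subgroup B G" and AB: "A \<subseteq> B" and fin: "finite B"
  shows "card ((\<lambda>b. rc G A b) ` B) * card A = card B"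
proof -
  let ?C = "(\<lambda>b. rc G A b) ` B"
  have Bc: "B \<subseteq> carrier G" by (rule subgroup.subset[OF B])
  have U: "\<Union>?C = B"
  proof
    show "\<Union>?C \<subseteq> B" using rc_subset[OF A B AB] by auto
    show "B \<subseteq> \<Union>?C"
    proof
      fix b assume "b \<in> B"
      then have "b \<in> rc G A b" using rc_self[OF A] Bc by auto
      then show "b \<in> \<Union>?C" using \<open>b \<in> B\<close> by blast
    qed
  qed
  have "card A * card ?C = card (\<Union>?C)"
  proof (rule card_partition)
    show "finite ?C" using fin by simp
    show "finite (\<Union>?C)" using U fin by simp
    show "card c = card A" if cC: "c \<in> ?C" for c
    proof -
      obtain b where "b \<in> B" "c = rc G A b" using cC by blast
      then show ?thesis using card_rc[OF A] Bc by auto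
    qed
    show "c1 \<inter> c2 = {}" if c: "c1 \<in> ?C" "c2 \<in> ?C" "c1 \<noteq> c2" for c1 c2
    proof (rule ccontr)
      assume "c1 \<inter> c2 \<noteq> {}"
      then obtain t where t: "t \<in> c1" "t \<in> c2" by blast
      obtain b1 b2 where b: "b1 \<in> B" "b2 \<in> B" "c1 = rc G A b1" "c2 = rc G A b2" using c(1,2) by blast
      have "rc G A b1 = rc G A b2" by (rule rc_eq2[OF A _ _ t[unfolded b(3,4)]]) (use b Bc in auto)
      then show False using b c(3) by simp
    qed
  qed
  then show ?thesis using U by (simp add: mult.commute)
qed

lemma nJ_subgroup:
  assumes J: "subgroup J G" and x: "x \<in> carrier G"
  shows "subgroup (nJ G J x) G"
proof (rule subgroupI)
  have Jc: "J \<subseteq> carrier G" by (rule subgroup.subset[OF J])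
  show "nJ G J x \<subseteq> carrier G" using Jc by (auto simp: nJ_def)
  show "nJ G J x \<noteq> {}"
  proof -
    have "x \<otimes> \<one> \<otimes> inv x = \<one>" using x by simp
    then have "\<one> \<in> nJ G J x" using J by (simp add: nJ_def subgroup.one_closed)
    then show ?thesis by blast
  qed
  show "inv a \<in> nJ G J x" if a: "a \<in> nJ G J x" for a
  proof -
    have a1: "a \<in> J" "x \<otimes> a \<otimes> inv x \<in> J" using a by (auto simp: nJ_def)
    have ac: "a \<in> carrier G" using a1 Jc by blast
    have eq: "x \<otimes> inv a \<otimes> inv x = inv (x \<otimes> a \<otimes> inv x)" using ac x by (simp add: gsimp)
    have "inv (x \<otimes> a \<otimes> inv x) \<in> J" by (rule subgroup.m_inv_closed[OF J a1(2)])
    then have "x \<otimes> inv a \<otimes> inv x \<in> J" by (simp only: eq)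
    moreover have "inv a \<in> J" by (rule subgroup.m_inv_closed[OF J a1(1)])
    ultimately show ?thesis by (simp add: nJ_def)
  qed
  show "a \<otimes> b \<in> nJ G J x" if a: "a \<in> nJ G J x" and b: "b \<in> nJ G J x" for a b
  proof -
    have a1: "a \<in> J" "x \<otimes> a \<otimes> inv x \<in> J" using a by (auto simp: nJ_def)
    have b1: "b \<in> J" "x \<otimes> b \<otimes> inv x \<in> J" using b by (auto simp: nJ_def)
    have ac: "a \<in> carrier G" "b \<in> carrier G" using a1 b1 Jc by auto
    have eq: "x \<otimes> (a \<otimes> b) \<otimes> inv x = (x \<otimes> a \<otimes> inv x) \<otimes> (x \<otimes> b \<otimes> inv x)" using ac x by (simp add: gsimp)
    have "(x \<otimes> a \<otimes> inv x) \<otimes> (x \<otimes> b \<otimes> inv x) \<in> J" by (rule subgroup.m_closed[OF J a1(2) b1(2)])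
    then have "x \<otimes> (a \<otimes> b) \<otimes> inv x \<in> J" by (simp only: eq)
    moreover have "a \<otimes> b \<in> J" by (rule subgroup.m_closed[OF J a1(1) b1(1)])
    ultimately show ?thesis by (simp add: nJ_def)
  qed
qed

lemma dcount:
  assumes J: "subgroup J G" and x: "x \<in> carrier G" and fin: "finite J"
  shows "card ((\<lambda>l. rc G J (x \<otimes> l)) ` J) * card (nJ G J x) = card J"
proof -
  have Jc: "J \<subseteq> carrier G" by (rule subgroup.subset[OF J])
  have N: "subgroup (nJ G J x) G" by (rule nJ_subgroup[OF J x])
  have "card ((\<lambda>l. rc G J (x \<otimes> l)) ` J) = card ((\<lambda>l. rc G (nJ G J x) l) ` J)"
  proof (rule card_image_cong_eq)
    fix a b assume a: "a \<in> J" and b: "b \<in> J"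
    have ac: "a \<in> carrier G" "b \<in> carrier G" using a b Jc by auto
    have e: "x \<otimes> a \<otimes> inv (x \<otimes> b) = x \<otimes> (a \<otimes> inv b) \<otimes> inv x" using ac x by (simp add: gsimp)
    have ab: "a \<otimes> inv b \<in> J" using a b J by (simp add: subgroup.m_closed subgroup.m_inv_closed)
    have 1: "rc G J (x \<otimes> a) = rc G J (x \<otimes> b) \<longleftrightarrow> x \<otimes> a \<otimes> inv (x \<otimes> b) \<in> J"
      by (rule rc_eq[OF J]) (use ac x in auto)
    have 2: "rc G (nJ G J x) a = rc G (nJ G J x) b \<longleftrightarrow> a \<otimes> inv b \<in> nJ G J x"
      by (rule rc_eq[OF N ac])
    have 3: "a \<otimes> inv b \<in> nJ G J x \<longleftrightarrow> x \<otimes> (a \<otimes> inv b) \<otimes> inv x \<in> J"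
      using ab by (simp add: nJ_def)
    show "rc G J (x \<otimes> a) = rc G J (x \<otimes> b) \<longleftrightarrow> rc G (nJ G J x) a = rc G (nJ G J x) b"
      by (simp only: 1 2 3 e)
  qed
  moreover have "card ((\<lambda>l. rc G (nJ G J x) l) ` J) * card (nJ G J x) = card J"
    by (rule rcount[OF N J _ fin]) (auto simp: nJ_def)
  ultimately show ?thesis by simp
qed

end


context group
begin

lemma sub_iff:
  assumes C: "subgroup C G"
  shows "subgroup H (G\<lparr>carrier := C\<rparr>) \<longleftrightarrow> subgroup H G \<and> H \<subseteq> C"
proof
  assume h: "subgroup H (G\<lparr>carrier := C\<rparr>)"
  have "subgroup H G" by (rule incl_subgroup[OF C h])
  moreover have "H \<subseteq> C" using subgroup.subset[OF h] by simp
  ultimately show "subgroup H G \<and> H \<subseteq> C" by simp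
next
  assume "subgroup H G \<and> H \<subseteq> C"
  then show "subgroup H (G\<lparr>carrier := C\<rparr>)" using subgroup_incl[OF _ C] by simp
qed

lemma mem_of_mul:
  assumes H: "subgroup H G" and "a \<in> carrier G" "b \<in> carrier G" "a \<otimes> b \<in> H" "b \<in> H"
  shows "a \<in> H"
proof -
  have "a = (a \<otimes> b) \<otimes> inv b" using assms(2,3) by (simp add: gsimp)
  moreover have "(a \<otimes> b) \<otimes> inv b \<in> H"
    by (rule subgroup.m_closed[OF H assms(4) subgroup.m_inv_closed[OF H assms(5)]])
  ultimately show ?thesis by simp
qed

lemma pc_char:
  assumes C: "subgroup C G"
  shows "subgroup_perfect_code H (G\<lparr>carrier := C\<rparr>) \<longleftrightarrow>
    subgroup H G \<and> H \<subseteq> C \<and> (\<exists>T. T \<subseteq> C \<and> (\<forall>t\<in>T. inv t \<in> T) \<and> (\<forall>g\<in>C. \<exists>!t. t \<in> T \<and> t \<otimes> inv g \<in> H))"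
  (is "?L \<longleftrightarrow> ?R")
proof
  have Cc: "C \<subseteq> carrier G" by (rule subgroup.subset[OF C])
  have invC: "\<And>x. x \<in> C \<Longrightarrow> inv\<^bsub>G\<lparr>carrier := C\<rparr>\<^esub> x = inv x" using C by simp
  have adj: "cay_adj (G\<lparr>carrier := C\<rparr>) S x y \<longleftrightarrow> x \<in> C \<and> y \<in> C \<and> (\<exists>s\<in>S. y = s \<otimes> x \<or> x = s \<otimes> y)" for S x y
    by (simp add: cay_adj_def)
  {
    assume L: ?L
    then obtain S where HG': "subgroup H (G\<lparr>carrier := C\<rparr>)" and S: "S \<subseteq> C - {\<one>}"
      and Sinv0: "\<forall>s\<in>S. inv\<^bsub>G\<lparr>carrier := C\<rparr>\<^esub> s \<in> S" and pc: "cay_perfect_code (G\<lparr>carrier := C\<rparr>) S H"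
      unfolding subgroup_perfect_code_def by auto
    have HG: "subgroup H G" and HC: "H \<subseteq> C" using HG' sub_iff[OF C] by auto
    have Sinv: "\<forall>s\<in>S. inv s \<in> S"
    proof
      fix s assume s: "s \<in> S"
      then have sC: "s \<in> C" using S by auto
      have "inv\<^bsub>G\<lparr>carrier := C\<rparr>\<^esub> s \<in> S" using Sinv0 s by auto
      then show "inv s \<in> S" using invC[OF sC] by simp
    qed
    have indep: "\<And>x y. x \<in> H \<Longrightarrow> y \<in> H \<Longrightarrow> \<not> cay_adj (G\<lparr>carrier := C\<rparr>) S x y"
      using pc unfolding cay_perfect_code_def by auto
    have uniq: "\<And>v. v \<in> C - H \<Longrightarrow> \<exists>!c. c \<in> H \<and> cay_adj (G\<lparr>carrier := C\<rparr>) S v c"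
      using pc unfolding cay_perfect_code_def by auto
    have one_H: "\<one> \<in> H" by (rule subgroup.one_closed[OF HG])
    have SH: "s \<notin> H" if s: "s \<in> S" for s
    proof
      assume sH: "s \<in> H"
      have "s \<in> C" "\<one> \<in> C" using s S subgroup.one_closed[OF C] by auto
      moreover have "s = s \<otimes> \<one>" using s S Cc by auto
      ultimately have "cay_adj (G\<lparr>carrier := C\<rparr>) S \<one> s" using s unfolding adj by blast
      then show False using indep[OF one_H sH] by simp
    qed
    define T where "T = insert \<one> S"
    have "T \<subseteq> C" using S subgroup.one_closed[OF C] by (auto simp: T_def)
    moreover have "\<forall>t\<in>T. inv t \<in> T" using Sinv by (auto simp: T_def)
    moreover have "\<forall>g\<in>C. \<exists>!t. t \<in> T \<and> t \<otimes> inv g \<in> H"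
    proof
      fix g assume g: "g \<in> C"
      have gc: "g \<in> carrier G" using g Cc by auto
      show "\<exists>!t. t \<in> T \<and> t \<otimes> inv g \<in> H"
      proof (cases "g \<in> H")
        case True
        show ?thesis
        proof (rule ex1I[of _ \<one>])
          show "\<one> \<in> T \<and> \<one> \<otimes> inv g \<in> H" using gc True subgroup.m_inv_closed[OF HG] by (simp add: T_def)
          fix t assume t: "t \<in> T \<and> t \<otimes> inv g \<in> H"
          have tc: "t \<in> carrier G" using t S Cc by (auto simp: T_def)
          have "t \<in> H" using mem_of_mul[OF HG tc _ _ subgroup.m_inv_closed[OF HG True]] t gc by simp
          then show "t = \<one>" using t SH by (auto simp: T_def)
        qed
      next
        case False
        let ?v = "inv g"
        have vC: "?v \<in> C" using g subgroup.m_inv_closed[OF C] by simp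
        have vH: "?v \<notin> H"
        proof
          assume "?v \<in> H" then have "inv ?v \<in> H" by (rule subgroup.m_inv_closed[OF HG])
          then show False using False gc by simp
        qed
        obtain c where c: "c \<in> H" "cay_adj (G\<lparr>carrier := C\<rparr>) S ?v c"
          and cu: "\<And>c'. c' \<in> H \<Longrightarrow> cay_adj (G\<lparr>carrier := C\<rparr>) S ?v c' \<Longrightarrow> c' = c"
          using uniq[of ?v] vC vH by auto
        have cc: "c \<in> carrier G" using c(1) HC Cc by auto
        obtain s where s: "s \<in> S" "c = s \<otimes> ?v \<or> ?v = s \<otimes> c" using c(2) by (auto simp: adj)
        have sc: "s \<in> carrier G" using s S Cc by auto
        have tS: "c \<otimes> g \<in> S"
        proof (cases "c = s \<otimes> ?v")
          case True
          have "c \<otimes> g = s" unfolding True using sc gc by (simp add: gsimp)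
          then show ?thesis using s by simp
        next
          case False
          then have e: "?v = s \<otimes> c" using s by simp
          have "inv s = c \<otimes> g"
          proof -
            have "inv s = c \<otimes> inv (s \<otimes> c)" using sc cc by (simp add: gsimp)
            also have "\<dots> = c \<otimes> g" by (simp only: e[symmetric] inv_inv[OF gc])
            finally show ?thesis .
          qed
          then show ?thesis using Sinv s by metis
        qed
        show ?thesis
        proof (rule ex1I[of _ "c \<otimes> g"])
          have "c \<otimes> g \<otimes> inv g = c" using cc gc by (simp add: gsimp)
          then show "c \<otimes> g \<in> T \<and> c \<otimes> g \<otimes> inv g \<in> H" using tS c(1) by (simp add: T_def)
          fix t assume t: "t \<in> T \<and> t \<otimes> inv g \<in> H"
          have tne: "t \<noteq> \<one>" using t vH gc by auto
          then have tS': "t \<in> S" using t by (auto simp: T_def)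
          have tc: "t \<in> carrier G" using tS' S Cc by auto
          have "cay_adj (G\<lparr>carrier := C\<rparr>) S ?v (t \<otimes> ?v)"
          proof -
            have "t \<otimes> ?v \<in> C" using t HC by auto
            then show ?thesis using vC tS' by (auto simp: adj)
          qed
          then have "t \<otimes> ?v = c" using cu t by simp
          then have "t \<otimes> ?v \<otimes> g = c \<otimes> g" by simp
          moreover have "t \<otimes> ?v \<otimes> g = t" using tc gc by (simp add: gsimp)
          ultimately show "t = c \<otimes> g" by simp
        qed
      qed
    qed
    ultimately show ?R using HG HC by blast
  }
  {
    assume R: ?R
    then obtain T where HG: "subgroup H G" and HC: "H \<subseteq> C" and TC: "T \<subseteq> C"
      and Tinv: "\<forall>t\<in>T. inv t \<in> T" and Tu: "\<forall>g\<in>C. \<exists>!t. t \<in> T \<and> t \<otimes> inv g \<in> H" by blast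
    define S where "S = T - H"
    have one_H: "\<one> \<in> H" by (rule subgroup.one_closed[OF HG])
    have Sc: "S \<subseteq> C - {\<one>}" using TC one_H by (auto simp: S_def)
    have Sinv: "\<forall>s\<in>S. inv\<^bsub>G\<lparr>carrier := C\<rparr>\<^esub> s \<in> S"
    proof
      fix s assume s: "s \<in> S"
      have sc: "s \<in> carrier G" using s Sc Cc by auto
      have "inv s \<notin> H"
      proof
        assume "inv s \<in> H" then have "inv (inv s) \<in> H" by (rule subgroup.m_inv_closed[OF HG])
        then show False using s sc by (simp add: S_def)
      qed
      then have "inv s \<in> S" using Tinv s by (simp add: S_def)
      then show "inv\<^bsub>G\<lparr>carrier := C\<rparr>\<^esub> s \<in> S" using invC s Sc by auto
    qed
    have "cay_perfect_code (G\<lparr>carrier := C\<rparr>) S H"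
      unfolding cay_perfect_code_def
    proof (intro conjI ballI)
      show "H \<subseteq> carrier (G\<lparr>carrier := C\<rparr>)" using HC by simp
      fix x y assume x: "x \<in> H" and y: "y \<in> H"
      show "\<not> cay_adj (G\<lparr>carrier := C\<rparr>) S x y"
      proof
        assume "cay_adj (G\<lparr>carrier := C\<rparr>) S x y"
        then obtain s where s: "s \<in> S" "y = s \<otimes> x \<or> x = s \<otimes> y" by (auto simp: adj)
        have sc: "s \<in> carrier G" using s Sc Cc by auto
        have xc: "x \<in> carrier G" "y \<in> carrier G" using x y HC Cc by auto
        have "s \<in> H"
        proof (cases "y = s \<otimes> x")
          case True then show ?thesis using mem_of_mul[OF HG sc xc(1)] y x by simp
        next
          case False then have "x = s \<otimes> y" using s by simp
          then show ?thesis using mem_of_mul[OF HG sc xc(2)] y x by simp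
        qed
        then show False using s by (simp add: S_def)
      qed
    next
      fix v assume v: "v \<in> carrier (G\<lparr>carrier := C\<rparr>) - H"
      have vC: "v \<in> C" "v \<notin> H" using v by auto
      have vc: "v \<in> carrier G" using vC Cc by auto
      have ivC: "inv v \<in> C" using vC subgroup.m_inv_closed[OF C] by simp
      obtain t where t: "t \<in> T" "t \<otimes> inv (inv v) \<in> H"
        and tu: "\<And>t'. t' \<in> T \<Longrightarrow> t' \<otimes> inv (inv v) \<in> H \<Longrightarrow> t' = t"
        using Tu ivC by metis
      have tc: "t \<in> carrier G" using t TC Cc by auto
      have tv: "t \<otimes> v \<in> H" using t vc by simp
      have tH: "t \<notin> H"
      proof
        assume "t \<in> H"
        have "v = inv t \<otimes> (t \<otimes> v)" using tc vc by (simp add: gsimp)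
        moreover have "inv t \<otimes> (t \<otimes> v) \<in> H"
          by (rule subgroup.m_closed[OF HG subgroup.m_inv_closed[OF HG \<open>t \<in> H\<close>] tv])
        ultimately show False using vC by simp
      qed
      show "\<exists>!c. c \<in> H \<and> cay_adj (G\<lparr>carrier := C\<rparr>) S v c"
      proof (rule ex1I[of _ "t \<otimes> v"])
        have "t \<otimes> v \<in> C" using tv HC by auto
        then show "t \<otimes> v \<in> H \<and> cay_adj (G\<lparr>carrier := C\<rparr>) S v (t \<otimes> v)"
          using tv vC t tH by (auto simp: adj S_def)
        fix c' assume c': "c' \<in> H \<and> cay_adj (G\<lparr>carrier := C\<rparr>) S v c'"
        obtain s where s: "s \<in> S" "c' = s \<otimes> v \<or> v = s \<otimes> c'" using c' by (auto simp: adj)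
        have sc: "s \<in> carrier G" using s Sc Cc by auto
        have c'c: "c' \<in> carrier G" using c' HC Cc by auto
        define t' where "t' = c' \<otimes> inv v"
        have t'T: "t' \<in> T"
        proof (cases "c' = s \<otimes> v")
          case True
          have "t' = s" unfolding t'_def True using sc vc by (simp add: gsimp)
          then show ?thesis using s by (simp add: S_def)
        next
          case False then have e: "v = s \<otimes> c'" using s by simp
          have "t' = inv s"
          proof -
            have "inv s = c' \<otimes> inv (s \<otimes> c')" using sc c'c by (simp add: gsimp)
            then show ?thesis unfolding t'_def by (simp only: e[symmetric])
          qed
          then show ?thesis using s Tinv by (simp add: S_def)
        qed
        have t'v: "t' \<otimes> v = c'" unfolding t'_def using c'c vc by (simp add: gsimp)
        have "t' \<otimes> inv (inv v) \<in> H" using t'v c' vc by simp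
        then have "t' = t" using tu t'T by simp
        then show "c' = t \<otimes> v" using t'v by simp
      qed
    qed
    then show ?L unfolding subgroup_perfect_code_def using HG HC sub_iff[OF C] Sc Sinv by auto
  }
qed

end


definition cnt :: "'a set set \<Rightarrow> 'a set \<Rightarrow> nat" where
  "cnt W E = card {A\<in>W. A \<subseteq> E}"

context group
begin

lemma dc_mem_iff: "z \<in> dcos G J g \<longleftrightarrow> (\<exists>a b. a \<in> J \<and> b \<in> J \<and> z = a \<otimes> g \<otimes> b)"
  by (auto simp: dcos_def)

lemma dc_mem:
  assumes J: "subgroup J G" and g: "g \<in> carrier G" and z: "z \<in> dcos G J g"
  shows "dcos G J z = dcos G J g"
proof -
  have Jc: "J \<subseteq> carrier G" by (rule subgroup.subset[OF J])
  obtain a b where ab: "a \<in> J" "b \<in> J" "z = a \<otimes> g \<otimes> b" using z by (auto simp: dc_mem_iff)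
  have ac: "a \<in> carrier G" "b \<in> carrier G" using ab Jc by auto
  show ?thesis
  proof (rule Set.set_eqI)
    fix w
    show "w \<in> dcos G J z \<longleftrightarrow> w \<in> dcos G J g"
    proof
      assume "w \<in> dcos G J z"
      then obtain c d where cd: "c \<in> J" "d \<in> J" "w = c \<otimes> z \<otimes> d" by (auto simp: dc_mem_iff)
      have cc: "c \<in> carrier G" "d \<in> carrier G" using cd Jc by auto
      have "w = (c \<otimes> a) \<otimes> g \<otimes> (b \<otimes> d)" unfolding cd(3) ab(3) using ac cc g by (simp add: gsimp)
      moreover have "c \<otimes> a \<in> J" by (rule subgroup.m_closed[OF J cd(1) ab(1)])
      moreover have "b \<otimes> d \<in> J" by (rule subgroup.m_closed[OF J ab(2) cd(2)])
      ultimately show "w \<in> dcos G J g" unfolding dc_mem_iff by blast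
    next
      assume "w \<in> dcos G J g"
      then obtain c d where cd: "c \<in> J" "d \<in> J" "w = c \<otimes> g \<otimes> d" by (auto simp: dc_mem_iff)
      have cc: "c \<in> carrier G" "d \<in> carrier G" using cd Jc by auto
      have "w = (c \<otimes> inv a) \<otimes> z \<otimes> (inv b \<otimes> d)" unfolding cd(3) ab(3) using ac cc g by (simp add: gsimp)
      moreover have "c \<otimes> inv a \<in> J" by (rule subgroup.m_closed[OF J cd(1) subgroup.m_inv_closed[OF J ab(1)]])
      moreover have "inv b \<otimes> d \<in> J" by (rule subgroup.m_closed[OF J subgroup.m_inv_closed[OF J ab(2)] cd(2)])
      ultimately show "w \<in> dcos G J z" unfolding dc_mem_iff by blast
    qed
  qed
qed

lemma dc_self:
  assumes J: "subgroup J G" and g: "g \<in> carrier G"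
  shows "g \<in> dcos G J g"
proof -
  have "g = \<one> \<otimes> g \<otimes> \<one>" using g by simp
  then show ?thesis unfolding dc_mem_iff using subgroup.one_closed[OF J] by blast
qed

lemma rc_sub_dc:
  assumes J: "subgroup J G" and a: "a \<in> carrier G" and g: "g \<in> carrier G"
  shows "rc G J a \<subseteq> dcos G J g \<longleftrightarrow> dcos G J a = dcos G J g"
proof
  assume "rc G J a \<subseteq> dcos G J g"
  then have "a \<in> dcos G J g" using rc_self[OF J a] by blast
  then show "dcos G J a = dcos G J g" by (rule dc_mem[OF J g])
next
  assume e: "dcos G J a = dcos G J g"
  have "rc G J a \<subseteq> dcos G J a"
  proof
    fix t assume "t \<in> rc G J a"
    then have t: "t \<in> carrier G" "t \<otimes> inv a \<in> J" by (auto simp: rc_def)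
    have "t = (t \<otimes> inv a) \<otimes> a \<otimes> \<one>" using t a by (simp add: gsimp)
    then show "t \<in> dcos G J a" unfolding dc_mem_iff using t(2) subgroup.one_closed[OF J] by blast
  qed
  then show "rc G J a \<subseteq> dcos G J g" using e by simp
qed

lemma dc_inv:
  assumes J: "subgroup J G" and a: "a \<in> carrier G" and g: "g \<in> carrier G"
    and e: "dcos G J a = dcos G J g"
  shows "dcos G J (inv a) = dcos G J (inv g)"
proof -
  have Jc: "J \<subseteq> carrier G" by (rule subgroup.subset[OF J])
  have "a \<in> dcos G J g" using dc_self[OF J a] e by simp
  then obtain c d where cd: "c \<in> J" "d \<in> J" "a = c \<otimes> g \<otimes> d" by (auto simp: dc_mem_iff)
  have cc: "c \<in> carrier G" "d \<in> carrier G" using cd Jc by auto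
  have "inv a = inv d \<otimes> inv g \<otimes> inv c" unfolding cd(3) using cc g by (simp add: gsimp)
  then have "inv a \<in> dcos G J (inv g)" unfolding dc_mem_iff
    using subgroup.m_inv_closed[OF J cd(1)] subgroup.m_inv_closed[OF J cd(2)] by blast
  then show ?thesis by (rule dc_mem[OF J inv_closed[OF g]])
qed

lemma dc_inv_iff:
  assumes J: "subgroup J G" and a: "a \<in> carrier G" and g: "g \<in> carrier G"
  shows "dcos G J (inv a) = dcos G J (inv g) \<longleftrightarrow> dcos G J a = dcos G J g"
  using dc_inv[OF J a g] dc_inv[OF J inv_closed[OF a] inv_closed[OF g]] a g by auto

lemma dc_pair:
  assumes J: "subgroup J G" and a: "a \<in> carrier G" and b: "b \<in> carrier G"
    and ba: "b \<in> dcos G J (inv a)"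
  shows "\<exists>t\<in>rc G J a. inv t \<in> rc G J b"
proof -
  have Jc: "J \<subseteq> carrier G" by (rule subgroup.subset[OF J])
  obtain c d where cd: "c \<in> J" "d \<in> J" "b = c \<otimes> inv a \<otimes> d" using ba by (auto simp: dc_mem_iff)
  have cc: "c \<in> carrier G" "d \<in> carrier G" using cd Jc by auto
  let ?t = "inv d \<otimes> a"
  have "?t \<otimes> inv a = inv d" using cc a by (simp add: gsimp)
  then have t1: "?t \<in> rc G J a" using subgroup.m_inv_closed[OF J cd(2)] cc a by (simp add: rc_def)
  have "inv ?t \<otimes> inv b = inv c" unfolding cd(3) using cc a by (simp add: gsimp)
  then have t2: "inv ?t \<in> rc G J b" using subgroup.m_inv_closed[OF J cd(1)] cc a by (simp add: rc_def)
  show ?thesis using t1 t2 by blast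
qed

lemma dc_loop:
  assumes J: "subgroup J G" and a: "a \<in> carrier G"
    and y: "y \<in> dcos G J a" and yy: "y \<otimes> y = \<one>"
  shows "\<exists>z\<in>rc G J a. z \<otimes> z = \<one>"
proof -
  have Jc: "J \<subseteq> carrier G" by (rule subgroup.subset[OF J])
  obtain c d where cd: "c \<in> J" "d \<in> J" "y = c \<otimes> a \<otimes> d" using y by (auto simp: dc_mem_iff)
  have cc: "c \<in> carrier G" "d \<in> carrier G" using cd Jc by auto
  let ?z = "d \<otimes> c \<otimes> a"
  have "?z \<otimes> inv a = d \<otimes> c" using cc a by (simp add: gsimp)
  then have z1: "?z \<in> rc G J a" using subgroup.m_closed[OF J cd(2) cd(1)] cc a by (simp add: rc_def)
  have "?z \<otimes> ?z = d \<otimes> (y \<otimes> y) \<otimes> inv d" unfolding cd(3) using cc a by (simp add: gsimp)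
  then have "?z \<otimes> ?z = \<one>" using yy cc by simp
  then show ?thesis using z1 by blast
qed

lemma dc_cosets:
  assumes J: "subgroup J G" and C: "subgroup C G" and JC: "J \<subseteq> C" and g: "g \<in> C"
  shows "{A \<in> (rc G J) ` C. A \<subseteq> dcos G J g} = (\<lambda>l. rc G J (g \<otimes> l)) ` J"
proof -
  have Jc: "J \<subseteq> carrier G" by (rule subgroup.subset[OF J])
  have Cc: "C \<subseteq> carrier G" by (rule subgroup.subset[OF C])
  have gc: "g \<in> carrier G" using g Cc by auto
  show ?thesis
  proof (rule Set.set_eqI)
    fix A
    show "A \<in> {A \<in> (rc G J) ` C. A \<subseteq> dcos G J g} \<longleftrightarrow> A \<in> (\<lambda>l. rc G J (g \<otimes> l)) ` J"
    proof
      assume "A \<in> {A \<in> (rc G J) ` C. A \<subseteq> dcos G J g}"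
      then obtain c where c: "c \<in> C" "A = rc G J c" "A \<subseteq> dcos G J g" by auto
      have cc: "c \<in> carrier G" using c Cc by auto
      have "c \<in> dcos G J g" using c rc_self[OF J cc] by auto
      then obtain l1 l2 where l: "l1 \<in> J" "l2 \<in> J" "c = l1 \<otimes> g \<otimes> l2" by (auto simp: dc_mem_iff)
      have lc: "l1 \<in> carrier G" "l2 \<in> carrier G" using l Jc by auto
      have "c \<otimes> inv (g \<otimes> l2) = l1" unfolding l(3) using lc gc by (simp add: gsimp)
      then have "rc G J c = rc G J (g \<otimes> l2)" using rc_eq[OF J cc] l(1) lc gc by simp
      then show "A \<in> (\<lambda>l. rc G J (g \<otimes> l)) ` J" using c(2) l(2) by blast
    next
      assume "A \<in> (\<lambda>l. rc G J (g \<otimes> l)) ` J"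
      then obtain l where l: "l \<in> J" "A = rc G J (g \<otimes> l)" by blast
      have lc: "l \<in> carrier G" using l Jc by auto
      have glC: "g \<otimes> l \<in> C" using subgroup.m_closed[OF C g] l JC by auto
      have "dcos G J (g \<otimes> l) = dcos G J g"
      proof (rule dc_mem[OF J gc])
        have "g \<otimes> l = \<one> \<otimes> g \<otimes> l" using gc lc by simp
        then show "g \<otimes> l \<in> dcos G J g" unfolding dc_mem_iff using subgroup.one_closed[OF J] l(1) by blast
      qed
      then have "A \<subseteq> dcos G J g" using rc_sub_dc[OF J _ gc] l gc lc by simp
      then show "A \<in> {A \<in> (rc G J) ` C. A \<subseteq> dcos G J g}" using l glC by blast
    qed
  qed
qed

end


context group
begin

definition InvW :: "'a set \<Rightarrow> 'a set \<Rightarrow> 'a set set \<Rightarrow> bool" where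
  "InvW L K W \<longleftrightarrow> (\<forall>g\<in>K. cnt W (dcos G L g) = cnt W (dcos G L (inv g)) \<and>
      (dcos G L g = dcos G L (inv g) \<and> odd (cnt W (dcos G L g)) \<longrightarrow> (\<exists>y\<in>dcos G L g. y \<otimes> y = \<one>)))"

lemma greedy:
  assumes L: "subgroup L G" and K: "subgroup K G" and LK: "L \<subseteq> K" and fin: "finite K"
  shows "W \<subseteq> (rc G L) ` K \<Longrightarrow> InvW L K W \<Longrightarrow>
    \<exists>T. T \<subseteq> \<Union>W \<and> (\<forall>t\<in>T. inv t \<in> T) \<and> (\<forall>A\<in>W. \<exists>!t. t \<in> T \<and> t \<in> A)"
proof (induction "card W" arbitrary: W rule: less_induct)
  case (less W)
  have Kc: "K \<subseteq> carrier G" by (rule subgroup.subset[OF K])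
  have finW: "finite W" using less.prems(1) fin finite_surj by blast
  have Wrep: "\<And>C. C \<in> W \<Longrightarrow> \<exists>c\<in>K. C = rc G L c" using less.prems(1) by auto
  have disj: "C1 = C2" if h: "C1 \<in> W" "C2 \<in> W" "t \<in> C1" "t \<in> C2" for C1 C2 t
  proof -
    obtain c1 where c1: "c1 \<in> K" "C1 = rc G L c1" using Wrep h(1) by blast
    obtain c2 where c2: "c2 \<in> K" "C2 = rc G L c2" using Wrep h(2) by blast
    show ?thesis unfolding c1(2) c2(2)
      by (rule rc_eq2[OF L _ _ h(3)[unfolded c1(2)] h(4)[unfolded c2(2)]]) (use c1 c2 Kc in auto)
  qed
  have subdc: "C \<subseteq> dcos G L g \<longleftrightarrow> dcos G L c = dcos G L g" if "C = rc G L c" "c \<in> K" "g \<in> K" for C c g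
    using rc_sub_dc[OF L, of c g] that Kc by auto
  have inv_of: "\<And>g. g \<in> K \<Longrightarrow> inv g \<in> K" using subgroup.m_inv_closed[OF K] by simp
  have InvD: "\<And>g. g \<in> K \<Longrightarrow> cnt W (dcos G L g) = cnt W (dcos G L (inv g))"
    and InvO: "\<And>g. g \<in> K \<Longrightarrow> dcos G L g = dcos G L (inv g) \<Longrightarrow> odd (cnt W (dcos G L g)) \<Longrightarrow> (\<exists>y\<in>dcos G L g. y \<otimes> y = \<one>)"
    using less.prems(2) unfolding InvW_def by auto
  show ?case
  proof (cases "W = {}")
    case True
    then show ?thesis by (intro exI[of _ "{}"]) auto
  next
    case False
    then obtain A where AW: "A \<in> W" by blast
    obtain a where a: "a \<in> K" "A = rc G L a" using Wrep AW by blast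
    have ac: "a \<in> carrier G" using a Kc by auto
    have iaK: "inv a \<in> K" using inv_of a by simp
    have pair: "\<exists>T. T \<subseteq> \<Union>W \<and> (\<forall>t\<in>T. inv t \<in> T) \<and> (\<forall>A\<in>W. \<exists>!t. t \<in> T \<and> t \<in> A)"
      if B: "B \<in> W" "b \<in> K" "B = rc G L b" "B \<noteq> A" "dcos G L b = dcos G L (inv a)" for B b
    proof -
      have bc: "b \<in> carrier G" using B Kc by auto
      define W' where "W' = W - {A, B}"
      have cW': "card W' < card W" unfolding W'_def
        by (rule psubset_card_mono[OF finW]) (use AW in blast)
      have sW': "W' \<subseteq> (rc G L) ` K" using less.prems(1) by (auto simp: W'_def)
      have IW': "InvW L K W'" unfolding InvW_def
      proof (intro ballI conjI impI)
        fix g assume g: "g \<in> K"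
        have gc: "g \<in> carrier G" using g Kc by auto
        have e1: "cnt W (dcos G L g) = cnt W' (dcos G L g) + (if A \<subseteq> dcos G L g then 1 else 0) + (if B \<subseteq> dcos G L g then 1 else 0)"
          unfolding cnt_def W'_def by (rule card_remove2[OF finW AW B(1) B(4)[symmetric]])
        have e2: "cnt W (dcos G L (inv g)) = cnt W' (dcos G L (inv g)) + (if A \<subseteq> dcos G L (inv g) then 1 else 0) + (if B \<subseteq> dcos G L (inv g) then 1 else 0)"
          unfolding cnt_def W'_def by (rule card_remove2[OF finW AW B(1) B(4)[symmetric]])
        have A1: "A \<subseteq> dcos G L g \<longleftrightarrow> dcos G L a = dcos G L g" by (rule subdc[OF a(2) a(1) g])
        have B2: "B \<subseteq> dcos G L (inv g) \<longleftrightarrow> dcos G L a = dcos G L g"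
          using subdc[OF B(3) B(2) inv_of[OF g]] B(5) dc_inv_iff[OF L ac gc] by simp
        have A2: "A \<subseteq> dcos G L (inv g) \<longleftrightarrow> dcos G L a = dcos G L (inv g)" by (rule subdc[OF a(2) a(1) inv_of[OF g]])
        have B1: "B \<subseteq> dcos G L g \<longleftrightarrow> dcos G L a = dcos G L (inv g)"
        proof -
          have "B \<subseteq> dcos G L g \<longleftrightarrow> dcos G L (inv a) = dcos G L g" using subdc[OF B(3) B(2) g] B(5) by simp
          also have "\<dots> \<longleftrightarrow> dcos G L (inv a) = dcos G L (inv (inv g))" using gc by simp
          also have "\<dots> \<longleftrightarrow> dcos G L a = dcos G L (inv g)" by (rule dc_inv_iff[OF L ac inv_closed[OF gc]])
          finally show ?thesis .
        qed
        show "cnt W' (dcos G L g) = cnt W' (dcos G L (inv g))"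
          using e1 e2 A1 A2 B1 B2 InvD[OF g] by (auto split: if_splits)
        assume sym: "dcos G L g = dcos G L (inv g) \<and> odd (cnt W' (dcos G L g))"
        have "odd (cnt W (dcos G L g))"
          using e1 A1 B1 sym by (auto split: if_splits)
        then show "\<exists>y\<in>dcos G L g. y \<otimes> y = \<one>" using InvO[OF g] sym by blast
      qed
      obtain T' where T': "T' \<subseteq> \<Union>W'" "\<forall>t\<in>T'. inv t \<in> T'" "\<forall>C\<in>W'. \<exists>!t. t \<in> T' \<and> t \<in> C"
        using less.hyps[OF cW' sW' IW'] by blast
      have "b \<in> dcos G L (inv a)" using dc_self[OF L bc] B(5) by simp
      then obtain t where t: "t \<in> A" "inv t \<in> B" using dc_pair[OF L ac bc] a(2) B(3) by blast
      have tc: "t \<in> carrier G" using t a(2) rc_carrier by blast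
      define T where "T = T' \<union> {t, inv t}"
      have "T \<subseteq> \<Union>W" using T'(1) t AW B(1) by (auto simp: T_def W'_def)
      moreover have "\<forall>s\<in>T. inv s \<in> T" using T'(2) tc by (auto simp: T_def)
      moreover have "\<forall>C\<in>W. \<exists>!s. s \<in> T \<and> s \<in> C"
      proof
        fix C assume CW: "C \<in> W"
        have T'out: "s \<notin> A" "s \<notin> B" if sT: "s \<in> T'" for s
        proof -
          obtain C' where C': "C' \<in> W'" "s \<in> C'" using T'(1) sT by blast
          show "s \<notin> A" using disj[of C' A s] C' AW by (auto simp: W'_def)
          show "s \<notin> B" using disj[of C' B s] C' B(1) by (auto simp: W'_def)
        qed
        have tB: "t \<notin> B" using disj[of A B t] t AW B by auto
        have itA: "inv t \<notin> A" using disj[of A B "inv t"] t AW B by auto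
        show "\<exists>!s. s \<in> T \<and> s \<in> C"
        proof (cases "C = A")
          case True
          show ?thesis
            by (rule ex1I[of _ t]) (use t T'out itA True in \<open>auto simp: T_def\<close>)
        next
          case CA: False
          show ?thesis
          proof (cases "C = B")
            case True
            show ?thesis
              by (rule ex1I[of _ "inv t"]) (use t T'out tB True in \<open>auto simp: T_def\<close>)
          next
            case CB: False
            have CW': "C \<in> W'" using CW CA CB by (auto simp: W'_def)
            have "t \<notin> C" using disj[of A C t] t AW CW CA by auto
            moreover have "inv t \<notin> C" using disj[of B C "inv t"] t B(1) CW CB by auto
            ultimately show ?thesis using T'(3) CW' by (auto simp: T_def)
          qed
        qed
      qed
      ultimately show ?thesis by blast
    qed
    show ?thesis
    proof (cases "dcos G L a = dcos G L (inv a)")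
      case False
      have "{C\<in>W. C \<subseteq> dcos G L a} \<noteq> {}" using AW subdc[OF a(2) a(1) a(1)] by auto
      then have "cnt W (dcos G L a) > 0" unfolding cnt_def using finW by (simp add: card_gt_0_iff)
      then have "cnt W (dcos G L (inv a)) > 0" using InvD[OF a(1)] by simp
      then obtain B where B: "B \<in> W" "B \<subseteq> dcos G L (inv a)" unfolding cnt_def
        by (metis (no_types, lifting) card.empty less_irrefl mem_Collect_eq subsetI subset_empty)
      obtain b where b: "b \<in> K" "B = rc G L b" using Wrep B(1) by blast
      have db: "dcos G L b = dcos G L (inv a)" using subdc[OF b(2) b(1) iaK] B(2) by simp
      have "B \<noteq> A"
      proof
        assume "B = A"
        then have "dcos G L a = dcos G L (inv a)" using subdc[OF a(2) a(1) iaK] B(2) by simp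
        then show False using False by simp
      qed
      then show ?thesis using pair[OF B(1) b(1) b(2) _ db] by simp
    next
      case sym: True
      show ?thesis
      proof (cases "odd (cnt W (dcos G L a))")
        case True
        obtain y where y: "y \<in> dcos G L a" "y \<otimes> y = \<one>" using InvO[OF a(1) sym True] by blast
        obtain z where z: "z \<in> A" "z \<otimes> z = \<one>" using dc_loop[OF L ac y] a(2) by blast
        have zc: "z \<in> carrier G" using z a(2) rc_carrier by blast
        have izz: "inv z = z" using z(2) zc by (metis inv_equality)
        define W' where "W' = W - {A}"
        have cW': "card W' < card W" unfolding W'_def
          by (rule psubset_card_mono[OF finW]) (use AW in blast)
        have sW': "W' \<subseteq> (rc G L) ` K" using less.prems(1) by (auto simp: W'_def)
        have IW': "InvW L K W'" unfolding InvW_def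
        proof (intro ballI conjI impI)
          fix g assume g: "g \<in> K"
          have gc: "g \<in> carrier G" using g Kc by auto
          have e1: "cnt W (dcos G L g) = cnt W' (dcos G L g) + (if A \<subseteq> dcos G L g then 1 else 0)"
            unfolding cnt_def W'_def by (rule card_remove1[OF finW AW])
          have e2: "cnt W (dcos G L (inv g)) = cnt W' (dcos G L (inv g)) + (if A \<subseteq> dcos G L (inv g) then 1 else 0)"
            unfolding cnt_def W'_def by (rule card_remove1[OF finW AW])
          have A1: "A \<subseteq> dcos G L g \<longleftrightarrow> dcos G L a = dcos G L g" by (rule subdc[OF a(2) a(1) g])
          have A2: "A \<subseteq> dcos G L (inv g) \<longleftrightarrow> dcos G L a = dcos G L g"
          proof -
            have "A \<subseteq> dcos G L (inv g) \<longleftrightarrow> dcos G L a = dcos G L (inv g)" by (rule subdc[OF a(2) a(1) inv_of[OF g]])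
            also have "\<dots> \<longleftrightarrow> dcos G L (inv a) = dcos G L (inv g)" using sym by simp
            also have "\<dots> \<longleftrightarrow> dcos G L a = dcos G L g" by (rule dc_inv_iff[OF L ac gc])
            finally show ?thesis .
          qed
          show "cnt W' (dcos G L g) = cnt W' (dcos G L (inv g))"
            using e1 e2 A1 A2 InvD[OF g] by (auto split: if_splits)
          assume sg: "dcos G L g = dcos G L (inv g) \<and> odd (cnt W' (dcos G L g))"
          have "odd (cnt W (dcos G L g))"
          proof (cases "A \<subseteq> dcos G L g")
            case True
            then have "dcos G L a = dcos G L g" using A1 by simp
            then have "odd (cnt W (dcos G L g))" using \<open>odd (cnt W (dcos G L a))\<close> by simp
            moreover have "even (cnt W (dcos G L g))" using e1 True sg[THEN conjunct2] by simp
            ultimately show ?thesis by simp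
          next
            case False
            then show ?thesis using e1 sg[THEN conjunct2] by simp
          qed
          then show "\<exists>y\<in>dcos G L g. y \<otimes> y = \<one>" using InvO[OF g] sg by blast
        qed
        obtain T' where T': "T' \<subseteq> \<Union>W'" "\<forall>t\<in>T'. inv t \<in> T'" "\<forall>C\<in>W'. \<exists>!t. t \<in> T' \<and> t \<in> C"
          using less.hyps[OF cW' sW' IW'] by blast
        define T where "T = insert z T'"
        have "T \<subseteq> \<Union>W" using T'(1) z AW by (auto simp: T_def W'_def)
        moreover have "\<forall>s\<in>T. inv s \<in> T" using T'(2) izz by (auto simp: T_def)
        moreover have "\<forall>C\<in>W. \<exists>!s. s \<in> T \<and> s \<in> C"
        proof
          fix C assume CW: "C \<in> W"
          have T'out: "s \<notin> A" if sT: "s \<in> T'" for s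
          proof -
            obtain C' where C': "C' \<in> W'" "s \<in> C'" using T'(1) sT by blast
            show "s \<notin> A" using disj[of C' A s] C' AW by (auto simp: W'_def)
          qed
          show "\<exists>!s. s \<in> T \<and> s \<in> C"
          proof (cases "C = A")
            case True
            show ?thesis
              by (rule ex1I[of _ z]) (use z T'out True in \<open>auto simp: T_def\<close>)
          next
            case CA: False
            have CW': "C \<in> W'" using CW CA by (auto simp: W'_def)
            have "z \<notin> C" using disj[of A C z] z AW CW CA by auto
            then show ?thesis using T'(3) CW' by (auto simp: T_def)
          qed
        qed
        ultimately show ?thesis by blast
      next
        case False
        have "A \<in> {C\<in>W. C \<subseteq> dcos G L a}" using AW subdc[OF a(2) a(1) a(1)] by auto
        moreover have finS: "finite {C\<in>W. C \<subseteq> dcos G L a}" using finW by simp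
        ultimately have "card {C\<in>W. C \<subseteq> dcos G L a} > 0" by (auto simp: card_gt_0_iff)
        then have "card {C\<in>W. C \<subseteq> dcos G L a} \<ge> 2" using False unfolding cnt_def by presburger
        then have "card ({C\<in>W. C \<subseteq> dcos G L a} - {A}) \<ge> 1"
          using \<open>A \<in> {C\<in>W. C \<subseteq> dcos G L a}\<close> finS by (simp add: card_Diff_singleton)
        then obtain B where B: "B \<in> {C\<in>W. C \<subseteq> dcos G L a} - {A}"
          by (metis card.empty ex_in_conv not_one_le_zero)
        then have B1: "B \<in> W" "B \<subseteq> dcos G L a" "B \<noteq> A" by auto
        obtain b where b: "b \<in> K" "B = rc G L b" using Wrep B1(1) by blast
        have db: "dcos G L b = dcos G L (inv a)" using subdc[OF b(2) b(1) a(1)] B1(2) sym by simp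
        show ?thesis using pair[OF B1(1) b(1) b(2) B1(3) db] by simp
      qed
    qed
  qed
qed

end


lemma two_adic:
  fixes cL nL cH nH cN l hh :: nat
  assumes "cL * nL = l" "cH * nH = hh" "cN * nL = nH" "odd cL"
    "(2::nat) ^ multiplicity 2 hh = 2 ^ multiplicity 2 l" "l > 0" "hh > 0"
  shows "odd cH \<and> odd cN"
proof -
  have p: "prime_elem (2::nat)" by (rule prime_imp_prime_elem[OF two_is_prime_nat])
  have nz: "cL \<noteq> 0" "nL \<noteq> 0" "cH \<noteq> 0" "nH \<noteq> 0" "cN \<noteq> 0" using assms(1,2,3,6,7) by auto
  have m: "multiplicity 2 hh = multiplicity 2 l" using assms(5) power_inject_exp[of 2] by simp
  have ml: "multiplicity 2 l = multiplicity 2 cL + multiplicity 2 nL"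
    using assms(1) prime_elem_multiplicity_mult_distrib[OF p nz(1) nz(2)] by simp
  have mcl: "multiplicity 2 cL = 0" using assms(4) odd_iff_mult0[OF nz(1)] by simp
  have mnh: "multiplicity 2 nH = multiplicity 2 cN + multiplicity 2 nL"
    using assms(3) prime_elem_multiplicity_mult_distrib[OF p nz(5) nz(2)] by simp
  have mh: "multiplicity 2 hh = multiplicity 2 cH + multiplicity 2 nH"
    using assms(2) prime_elem_multiplicity_mult_distrib[OF p nz(3) nz(4)] by simp
  have "multiplicity 2 cH = 0" "multiplicity 2 cN = 0" using m ml mcl mnh mh by auto
  then show ?thesis using odd_iff_mult0[OF nz(3)] odd_iff_mult0[OF nz(5)] by simp
qed


context group
begin

lemma nJ_conj1:
  assumes J: "subgroup J G" and x: "x \<in> carrier G" and xx: "x \<otimes> x \<in> J" and n: "n \<in> nJ G J x"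
  shows "x \<otimes> n \<otimes> inv x \<in> nJ G J x"
proof -
  have Jc: "J \<subseteq> carrier G" by (rule subgroup.subset[OF J])
  have n1: "n \<in> J" "x \<otimes> n \<otimes> inv x \<in> J" using n by (auto simp: nJ_def)
  have nc: "n \<in> carrier G" using n1 Jc by auto
  have "x \<otimes> (x \<otimes> n \<otimes> inv x) \<otimes> inv x = (x \<otimes> x) \<otimes> n \<otimes> inv (x \<otimes> x)" using x nc by (simp add: gsimp)
  moreover have "(x \<otimes> x) \<otimes> n \<otimes> inv (x \<otimes> x) \<in> J"
    by (rule subgroup.m_closed[OF J subgroup.m_closed[OF J xx n1(1)] subgroup.m_inv_closed[OF J xx]])
  ultimately show ?thesis using n1 by (simp add: nJ_def)
qed

lemma nJ_conj2:
  assumes J: "subgroup J G" and x: "x \<in> carrier G" and xx: "x \<otimes> x \<in> J" and n: "n \<in> nJ G J x"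
  shows "inv x \<otimes> n \<otimes> x \<in> nJ G J x"
proof -
  have Jc: "J \<subseteq> carrier G" by (rule subgroup.subset[OF J])
  have n1: "n \<in> J" "x \<otimes> n \<otimes> inv x \<in> J" using n by (auto simp: nJ_def)
  have nc: "n \<in> carrier G" using n1 Jc by auto
  have e: "inv x \<otimes> n \<otimes> x = inv (x \<otimes> x) \<otimes> (x \<otimes> n \<otimes> inv x) \<otimes> (x \<otimes> x)" using x nc by (simp add: gsimp)
  have "inv (x \<otimes> x) \<otimes> (x \<otimes> n \<otimes> inv x) \<otimes> (x \<otimes> x) \<in> J"
    by (rule subgroup.m_closed[OF J subgroup.m_closed[OF J subgroup.m_inv_closed[OF J xx] n1(2)] xx])
  then have "inv x \<otimes> n \<otimes> x \<in> J" by (simp only: e)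
  moreover have "x \<otimes> (inv x \<otimes> n \<otimes> x) \<otimes> inv x = n" using x nc by (simp add: gsimp)
  ultimately show ?thesis using n1 by (simp add: nJ_def)
qed

lemma nJ_xx:
  assumes J: "subgroup J G" and x: "x \<in> carrier G" and xx: "x \<otimes> x \<in> J"
  shows "inv (x \<otimes> x) \<in> nJ G J x"
proof -
  have "x \<otimes> inv (x \<otimes> x) \<otimes> inv x = inv (x \<otimes> x)" using x by (simp add: gsimp)
  then show ?thesis using subgroup.m_inv_closed[OF J xx] by (simp add: nJ_def)
qed

lemma loop_exists:
  assumes fin: "finite (carrier G)"
    and H: "subgroup H G" and K: "subgroup K G" and HK: "subgroup (H <#> K) G"
    and Ldef: "L = H \<inter> K"
    and tp: "two_part (card H) = two_part (card L)"
    and TC: "T \<subseteq> H <#> K" and Tinv: "\<forall>t\<in>T. inv t \<in> T"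
    and Tu: "\<forall>g\<in>H <#> K. \<exists>!t. t \<in> T \<and> t \<otimes> inv g \<in> H"
    and g: "g \<in> K" and sym: "dcos G L g = dcos G L (inv g)"
    and odd: "odd (cnt (rc G L ` K) (dcos G L g))"
  shows "\<exists>y\<in>dcos G L g. y \<otimes> y = \<one>"
proof -
  have Lsub: "subgroup L G" unfolding Ldef by (rule subgroups_Inter_pair[OF H K])
  have Hc: "H \<subseteq> carrier G" by (rule subgroup.subset[OF H])
  have Kc: "K \<subseteq> carrier G" by (rule subgroup.subset[OF K])
  have HKc: "H <#> K \<subseteq> carrier G" by (rule subgroup.subset[OF HK])
  have Lc: "L \<subseteq> carrier G" by (rule subgroup.subset[OF Lsub])
  have LH: "L \<subseteq> H" and LK: "L \<subseteq> K" using Ldef by auto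
  have gc: "g \<in> carrier G" using g Kc by auto
  have KHK: "K \<subseteq> H <#> K"
  proof
    fix k assume k: "k \<in> K"
    then have "k = \<one> \<otimes> k" using Kc by auto
    then show "k \<in> H <#> K" unfolding set_mult_def using subgroup.one_closed[OF H] k by blast
  qed
  have HHK: "H \<subseteq> H <#> K"
  proof
    fix h assume h: "h \<in> H"
    then have "h = h \<otimes> \<one>" using Hc by auto
    then show "h \<in> H <#> K" unfolding set_mult_def using subgroup.one_closed[OF K] h by blast
  qed
  have "inv g \<in> dcos G L g" using dc_self[OF Lsub inv_closed[OF gc]] sym by simp
  then obtain l1 l2 where l: "l1 \<in> L" "l2 \<in> L" "inv g = l1 \<otimes> g \<otimes> l2" by (auto simp: dc_mem_iff)
  have lc: "l1 \<in> carrier G" "l2 \<in> carrier G" using l Lc by auto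
  define x where "x = l2 \<otimes> g"
  have xc: "x \<in> carrier G" using lc gc by (simp add: x_def)
  have xK: "x \<in> K" unfolding x_def by (rule subgroup.m_closed[OF K _ g]) (use l(2) LK in auto)
  have xxL: "x \<otimes> x \<in> L"
  proof -
    have "x \<otimes> x = l2 \<otimes> inv l1 \<otimes> (l1 \<otimes> g \<otimes> l2) \<otimes> g" unfolding x_def using lc gc by (simp add: gsimp)
    also have "\<dots> = l2 \<otimes> inv l1 \<otimes> inv g \<otimes> g" by (simp only: l(3)[symmetric])
    also have "\<dots> = l2 \<otimes> inv l1" using lc gc by (simp add: gsimp)
    finally show ?thesis using subgroup.m_closed[OF Lsub l(2) subgroup.m_inv_closed[OF Lsub l(1)]] by simp
  qed
  have xxH: "x \<otimes> x \<in> H" using xxL LH by auto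
  have dxg: "dcos G L x = dcos G L g"
  proof (rule dc_mem[OF Lsub gc])
    have "x = l2 \<otimes> g \<otimes> \<one>" using lc gc by (simp add: x_def)
    then show "x \<in> dcos G L g" unfolding dc_mem_iff using l(2) subgroup.one_closed[OF Lsub] by blast
  qed
  define cL where "cL = card ((\<lambda>l. rc G L (x \<otimes> l)) ` L)"
  define cH where "cH = card ((\<lambda>h. rc G H (x \<otimes> h)) ` H)"
  define NL where "NL = nJ G L x"
  define NH where "NH = nJ G H x"
  define cN where "cN = card ((rc G NL) ` NH)"
  have cLodd: "odd cL"
    using odd unfolding cnt_def cL_def dxg[symmetric] dc_cosets[OF Lsub K LK xK] .
  have NLsub: "subgroup NL G" unfolding NL_def by (rule nJ_subgroup[OF Lsub xc])
  have NHsub: "subgroup NH G" unfolding NH_def by (rule nJ_subgroup[OF H xc])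
  have NLNH: "NL \<subseteq> NH" using LH by (auto simp: NL_def NH_def nJ_def)
  have finH: "finite H" using fin Hc finite_subset by blast
  have finL: "finite L" using fin Lc finite_subset by blast
  have finNH: "finite NH" using finH by (simp add: NH_def nJ_def)
  have c1: "cL * card NL = card L" unfolding cL_def NL_def by (rule dcount[OF Lsub xc finL])
  have c2: "cH * card NH = card H" unfolding cH_def NH_def by (rule dcount[OF H xc finH])
  have c3: "cN * card NL = card NH" unfolding cN_def by (rule rcount[OF NLsub NHsub NLNH finNH])
  have posL: "card L > 0" using finL subgroup.one_closed[OF Lsub] card_gt_0_iff by blast
  have posH: "card H > 0" using finH subgroup.one_closed[OF H] card_gt_0_iff by blast
  have "odd cH \<and> odd cN"
    by (rule two_adic[OF c1 c2 c3 cLodd _ posL posH]) (use tp in \<open>simp add: two_part_def\<close>)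
  then have cHodd: "odd cH" and cNodd: "odd cN" by auto
  define F where "F = dcos G H x"
  have xHK: "x \<in> H <#> K" using xK KHK by auto
  have cosF: "{A \<in> (rc G H) ` (H <#> K). A \<subseteq> F} = (\<lambda>h. rc G H (x \<otimes> h)) ` H"
    unfolding F_def by (rule dc_cosets[OF H HK HHK xHK])
  have Tc: "T \<subseteq> carrier G" using TC HKc by auto
  have injT: "inj_on (rc G H) (T \<inter> F)"
  proof (rule inj_onI)
    fix t1 t2 assume t1: "t1 \<in> T \<inter> F" and t2: "t2 \<in> T \<inter> F" and e: "rc G H t1 = rc G H t2"
    have tc: "t1 \<in> carrier G" "t2 \<in> carrier G" using t1 t2 Tc by auto
    have a1: "t1 \<otimes> inv t2 \<in> H" using e rc_eq[OF H tc] by simp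
    have a2: "t2 \<otimes> inv t2 \<in> H" using tc subgroup.one_closed[OF H] by simp
    have "t2 \<in> H <#> K" using t2 TC by auto
    then have "\<exists>!t. t \<in> T \<and> t \<otimes> inv t2 \<in> H" using Tu by blast
    then show "t1 = t2" using a1 a2 t1 t2 by blast
  qed
  have imT: "rc G H ` (T \<inter> F) = {A \<in> (rc G H) ` (H <#> K). A \<subseteq> F}"
  proof (rule Set.set_eqI)
    fix A
    show "A \<in> rc G H ` (T \<inter> F) \<longleftrightarrow> A \<in> {A \<in> (rc G H) ` (H <#> K). A \<subseteq> F}"
    proof
      assume "A \<in> rc G H ` (T \<inter> F)"
      then obtain t where t: "t \<in> T" "t \<in> F" "A = rc G H t" by blast
      have tc: "t \<in> carrier G" using t Tc by auto
      have "dcos G H t = dcos G H x" using dc_mem[OF H xc] t(2) by (simp add: F_def)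
      then have "A \<subseteq> F" using rc_sub_dc[OF H tc xc] t(3) by (simp add: F_def)
      then show "A \<in> {A \<in> (rc G H) ` (H <#> K). A \<subseteq> F}" using t TC by blast
    next
      assume "A \<in> {A \<in> (rc G H) ` (H <#> K). A \<subseteq> F}"
      then obtain c where c: "c \<in> H <#> K" "A = rc G H c" "A \<subseteq> F" by blast
      have cc: "c \<in> carrier G" using c HKc by auto
      obtain t where t: "t \<in> T" "t \<otimes> inv c \<in> H" using Tu c(1) by blast
      have tc: "t \<in> carrier G" using t Tc by auto
      have "rc G H t = rc G H c" using rc_eq[OF H tc cc] t by simp
      moreover have "t \<in> F" using rc_self[OF H tc] c(2,3) calculation by auto
      ultimately show "A \<in> rc G H ` (T \<inter> F)" using t c(2) by blast
    qed
  qed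
  have cardTF: "card (T \<inter> F) = cH"
    unfolding cH_def cosF[symmetric] imT[symmetric] using card_image[OF injT] by simp
  have invF: "inv t \<in> T \<inter> F" if t: "t \<in> T \<inter> F" for t
  proof -
    obtain a b where ab: "a \<in> H" "b \<in> H" "t = a \<otimes> x \<otimes> b" using t by (auto simp: F_def dc_mem_iff)
    have abc: "a \<in> carrier G" "b \<in> carrier G" using ab Hc by auto
    have "inv t = (inv b \<otimes> inv (x \<otimes> x)) \<otimes> x \<otimes> inv a" unfolding ab(3) using abc xc by (simp add: gsimp)
    moreover have "inv b \<otimes> inv (x \<otimes> x) \<in> H"
      by (rule subgroup.m_closed[OF H subgroup.m_inv_closed[OF H ab(2)] subgroup.m_inv_closed[OF H xxH]])
    moreover have "inv a \<in> H" by (rule subgroup.m_inv_closed[OF H ab(1)])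
    ultimately have "inv t \<in> F" unfolding F_def dc_mem_iff by blast
    then show ?thesis using t Tinv by auto
  qed
  obtain y where y: "y \<in> T \<inter> F" "inv y = y"
  proof -
    have "\<exists>y\<in>T \<inter> F. inv y = y"
    proof (rule invol_fixpoint)
      show "finite (T \<inter> F)" using fin Tc finite_subset by blast
      show "\<And>t. t \<in> T \<inter> F \<Longrightarrow> inv t \<in> T \<inter> F" by (rule invF)
      show "\<And>t. t \<in> T \<inter> F \<Longrightarrow> inv (inv t) = t" using Tc by auto
      show "odd (card (T \<inter> F))" using cardTF cHodd by simp
    qed
    then show ?thesis using that by blast
  qed
  have yc: "y \<in> carrier G" using y Tc by auto
  have yy: "y \<otimes> y = \<one>"
  proof -
    have "y \<otimes> inv y = \<one>" using yc by simp
    then show ?thesis using y(2) by simp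
  qed
  obtain z where z: "z \<in> rc G H x" "z \<otimes> z = \<one>" using dc_loop[OF H xc _ yy] y(1) by (auto simp: F_def)
  have zc: "z \<in> carrier G" using z(1) rc_carrier by blast
  have izz: "inv z = z" using z(2) zc by (metis inv_equality)
  have zz2: "\<And>w. w \<in> carrier G \<Longrightarrow> z \<otimes> (z \<otimes> w) = w"
  proof -
    fix w assume w: "w \<in> carrier G"
    have "z \<otimes> (z \<otimes> w) = (z \<otimes> z) \<otimes> w" using zc w by (simp add: m_assoc)
    then show "z \<otimes> (z \<otimes> w) = w" using z(2) w by simp
  qed
  define h where "h = z \<otimes> inv x"
  have hH: "h \<in> H" using z(1) by (simp add: rc_def h_def)
  have hc: "h \<in> carrier G" using hH Hc by auto
  have hx: "h \<otimes> x = z" using zc xc by (simp add: h_def gsimp)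
  have hNH: "h \<in> NH"
  proof -
    have "x \<otimes> h \<otimes> inv x = inv h \<otimes> inv (x \<otimes> x)" using zc xc by (simp add: h_def gsimp izz)
    moreover have "inv h \<otimes> inv (x \<otimes> x) \<in> H"
      by (rule subgroup.m_closed[OF H subgroup.m_inv_closed[OF H hH] subgroup.m_inv_closed[OF H xxH]])
    ultimately show ?thesis using hH by (simp add: NH_def nJ_def)
  qed
  have NLc: "NL \<subseteq> carrier G" by (rule subgroup.subset[OF NLsub])
  have NHc: "NH \<subseteq> carrier G" by (rule subgroup.subset[OF NHsub])
  define \<phi> where "\<phi> = (\<lambda>c. inv x \<otimes> c \<otimes> z)"
  define f where "f = (\<lambda>A. {b \<in> carrier G. x \<otimes> b \<otimes> inv z \<in> A})"
  have fkey: "f (rc G NL c) = rc G NL (\<phi> c)" if c: "c \<in> carrier G" for c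
  proof (rule Set.set_eqI)
    fix b
    show "b \<in> f (rc G NL c) \<longleftrightarrow> b \<in> rc G NL (\<phi> c)"
    proof (cases "b \<in> carrier G")
      case False then show ?thesis by (simp add: f_def rc_def)
    next
      case True
      define u where "u = x \<otimes> b \<otimes> inv z \<otimes> inv c"
      have uc: "u \<in> carrier G" using True xc zc c by (simp add: u_def)
      have e1: "b \<in> f (rc G NL c) \<longleftrightarrow> u \<in> NL" using True xc zc c by (simp add: f_def rc_def u_def)
      have e2: "b \<otimes> inv (\<phi> c) = inv x \<otimes> u \<otimes> x" using True xc zc c by (simp add: \<phi>_def u_def gsimp)
      have e3: "b \<in> rc G NL (\<phi> c) \<longleftrightarrow> inv x \<otimes> u \<otimes> x \<in> NL" using True by (simp add: rc_def e2)
      have "u \<in> NL \<longleftrightarrow> inv x \<otimes> u \<otimes> x \<in> NL"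
      proof
        assume "u \<in> NL" then show "inv x \<otimes> u \<otimes> x \<in> NL" unfolding NL_def by (rule nJ_conj2[OF Lsub xc xxL])
      next
        assume "inv x \<otimes> u \<otimes> x \<in> NL"
        then have "x \<otimes> (inv x \<otimes> u \<otimes> x) \<otimes> inv x \<in> NL" unfolding NL_def by (rule nJ_conj1[OF Lsub xc xxL])
        moreover have "x \<otimes> (inv x \<otimes> u \<otimes> x) \<otimes> inv x = u" using uc xc by (simp add: gsimp)
        ultimately show "u \<in> NL" by simp
      qed
      then show ?thesis using e1 e3 by simp
    qed
  qed
  have phiNH: "\<phi> c \<in> NH" if c: "c \<in> NH" for c
  proof -
    have cc: "c \<in> carrier G" using c NHc by auto
    have "\<phi> c = inv x \<otimes> (c \<otimes> h) \<otimes> x" using cc xc hc by (simp add: \<phi>_def hx[symmetric] gsimp)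
    moreover have "inv x \<otimes> (c \<otimes> h) \<otimes> x \<in> NH" unfolding NH_def
      by (rule nJ_conj2[OF H xc xxH]) (use subgroup.m_closed[OF NHsub c hNH] in \<open>simp add: NH_def\<close>)
    ultimately show ?thesis by simp
  qed
  have phi2: "rc G NL (\<phi> (\<phi> c)) = rc G NL c" if c: "c \<in> carrier G" for c
  proof -
    have "\<phi> (\<phi> c) \<otimes> inv c = inv (x \<otimes> x)" using c xc zc by (simp add: \<phi>_def gsimp zz2)
    moreover have "inv (x \<otimes> x) \<in> NL" unfolding NL_def by (rule nJ_xx[OF Lsub xc xxL])
    ultimately show ?thesis using rc_eq[OF NLsub _ c] c xc zc by (simp add: \<phi>_def)
  qed
  define X where "X = (rc G NL) ` NH"
  obtain A where A: "A \<in> X" "f A = A"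
  proof -
    have "\<exists>A\<in>X. f A = A"
    proof (rule invol_fixpoint)
      show "finite X" using finNH by (simp add: X_def)
      show "f A \<in> X" if "A \<in> X" for A
      proof -
        obtain c where c: "c \<in> NH" "A = rc G NL c" using \<open>A \<in> X\<close> by (auto simp: X_def)
        have "f A = rc G NL (\<phi> c)" using fkey c NHc by auto
        then show ?thesis using phiNH[OF c(1)] by (simp add: X_def)
      qed
      show "f (f A) = A" if "A \<in> X" for A
      proof -
        obtain c where c: "c \<in> NH" "A = rc G NL c" using \<open>A \<in> X\<close> by (auto simp: X_def)
        have cc: "c \<in> carrier G" using c NHc by auto
        have pc: "\<phi> c \<in> carrier G" using cc xc zc by (simp add: \<phi>_def)
        have "f (f A) = f (rc G NL (\<phi> c))" using fkey[OF cc] c(2) by simp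
        also have "\<dots> = rc G NL (\<phi> (\<phi> c))" by (rule fkey[OF pc])
        also have "\<dots> = A" using phi2[OF cc] c(2) by simp
        finally show ?thesis .
      qed
      show "odd (card X)" using cNodd by (simp add: X_def cN_def)
    qed
    then show ?thesis using that by blast
  qed
  obtain c where c: "c \<in> NH" "A = rc G NL c" using A(1) by (auto simp: X_def)
  have cc: "c \<in> carrier G" using c NHc by auto
  have pc: "\<phi> c \<in> carrier G" using cc xc zc by (simp add: \<phi>_def)
  have "rc G NL c = rc G NL (\<phi> c)" using A(2) fkey[OF cc] c(2) by simp
  then have nNL: "c \<otimes> inv (\<phi> c) \<in> NL" using rc_eq[OF NLsub cc pc] by simp
  have nL: "inv (c \<otimes> inv (\<phi> c)) \<in> L"
    using subgroup.m_inv_closed[OF NLsub nNL] by (simp add: NL_def nJ_def)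
  define w where "w = c \<otimes> z \<otimes> inv c"
  have "w = \<one> \<otimes> x \<otimes> inv (c \<otimes> inv (\<phi> c))" using cc xc zc by (simp add: w_def \<phi>_def gsimp)
  then have "w \<in> dcos G L x" unfolding dc_mem_iff using subgroup.one_closed[OF Lsub] nL by blast
  then have wg: "w \<in> dcos G L g" using dxg by simp
  have "w \<otimes> w = \<one>" using cc zc by (simp add: w_def gsimp zz2)
  then show ?thesis using wg by blast
qed

end


context group
begin

lemma card_nJ_inv:
  assumes J: "subgroup J G" and g: "g \<in> carrier G"
  shows "card (nJ G J g) = card (nJ G J (inv g))"
proof -
  have Jc: "J \<subseteq> carrier G" by (rule subgroup.subset[OF J])
  have im: "(\<lambda>n. g \<otimes> n \<otimes> inv g) ` nJ G J g = nJ G J (inv g)"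
  proof (rule Set.set_eqI)
    fix m
    show "m \<in> (\<lambda>n. g \<otimes> n \<otimes> inv g) ` nJ G J g \<longleftrightarrow> m \<in> nJ G J (inv g)"
    proof
      assume "m \<in> (\<lambda>n. g \<otimes> n \<otimes> inv g) ` nJ G J g"
      then obtain n where n: "n \<in> J" "g \<otimes> n \<otimes> inv g \<in> J" "m = g \<otimes> n \<otimes> inv g" by (auto simp: nJ_def)
      have nc: "n \<in> carrier G" using n Jc by auto
      have "inv g \<otimes> m \<otimes> inv (inv g) = n" unfolding n(3) using nc g by (simp add: gsimp)
      then show "m \<in> nJ G J (inv g)" using n by (simp add: nJ_def)
    next
      assume "m \<in> nJ G J (inv g)"
      then have m: "m \<in> J" "inv g \<otimes> m \<otimes> inv (inv g) \<in> J" by (auto simp: nJ_def)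
      have mc: "m \<in> carrier G" using m Jc by auto
      have e1: "inv g \<otimes> m \<otimes> inv (inv g) = inv g \<otimes> m \<otimes> g" using g by simp
      have e2: "g \<otimes> (inv g \<otimes> m \<otimes> g) \<otimes> inv g = m" using mc g by (simp add: gsimp)
      have "inv g \<otimes> m \<otimes> g \<in> nJ G J g" using m e1 e2 by (simp add: nJ_def)
      then show "m \<in> (\<lambda>n. g \<otimes> n \<otimes> inv g) ` nJ G J g" using e2 by (metis image_eqI)
    qed
  qed
  have "inj_on (\<lambda>n. g \<otimes> n \<otimes> inv g) (nJ G J g)"
  proof (rule inj_onI)
    fix u v assume u: "u \<in> nJ G J g" and v: "v \<in> nJ G J g" and e: "g \<otimes> u \<otimes> inv g = g \<otimes> v \<otimes> inv g"
    have uc: "u \<in> carrier G" "v \<in> carrier G" using u v Jc by (auto simp: nJ_def)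
    show "u = v" using e uc g by simp
  qed
  then show ?thesis using card_image im by metis
qed

lemma lemma4p3_aux:
  fixes H K :: "'a set"
  assumes "finite (carrier G)"
    and "subgroup H G" and "subgroup K G"
    and "subgroup (H <#>\<^bsub>G\<^esub> K) G"
    and "two_part (card H) = two_part (card (H \<inter> K))"
  shows "subgroup_perfect_code (H \<inter> K) (G\<lparr>carrier := K\<rparr>) \<longleftrightarrow>
         subgroup_perfect_code H (G\<lparr>carrier := H <#>\<^bsub>G\<^esub> K\<rparr>)"
proof -
  note fin = assms(1) and H = assms(2) and K = assms(3) and HK = assms(4) and tp = assms(5)
  define L where "L = H \<inter> K"
  have Lsub: "subgroup L G" unfolding L_def by (rule subgroups_Inter_pair[OF H K])
  have Hc: "H \<subseteq> carrier G" by (rule subgroup.subset[OF H])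
  have Kc: "K \<subseteq> carrier G" by (rule subgroup.subset[OF K])
  have HKc: "H <#> K \<subseteq> carrier G" by (rule subgroup.subset[OF HK])
  have Lc: "L \<subseteq> carrier G" by (rule subgroup.subset[OF Lsub])
  have LK: "L \<subseteq> K" by (auto simp: L_def)
  have KHK: "K \<subseteq> H <#> K"
  proof
    fix k assume k: "k \<in> K"
    then have "k = \<one> \<otimes> k" using Kc by auto
    then show "k \<in> H <#> K" unfolding set_mult_def using subgroup.one_closed[OF H] k by blast
  qed
  have HHK: "H \<subseteq> H <#> K"
  proof
    fix h assume h: "h \<in> H"
    then have "h = h \<otimes> \<one>" using Hc by auto
    then show "h \<in> H <#> K" unfolding set_mult_def using subgroup.one_closed[OF K] h by blast
  qed
  have PK: "subgroup_perfect_code L (G\<lparr>carrier := K\<rparr>) \<longleftrightarrow> subgroup L G \<and> L \<subseteq> K \<and>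
      (\<exists>T. T \<subseteq> K \<and> (\<forall>t\<in>T. inv t \<in> T) \<and> (\<forall>g\<in>K. \<exists>!t. t \<in> T \<and> t \<otimes> inv g \<in> L))"
    by (rule pc_char[OF K])
  have PHK: "subgroup_perfect_code H (G\<lparr>carrier := H <#> K\<rparr>) \<longleftrightarrow> subgroup H G \<and> H \<subseteq> H <#> K \<and>
      (\<exists>T. T \<subseteq> H <#> K \<and> (\<forall>t\<in>T. inv t \<in> T) \<and> (\<forall>g\<in>H <#> K. \<exists>!t. t \<in> T \<and> t \<otimes> inv g \<in> H))"
    by (rule pc_char[OF HK])
  have "subgroup_perfect_code L (G\<lparr>carrier := K\<rparr>) \<longleftrightarrow> subgroup_perfect_code H (G\<lparr>carrier := H <#> K\<rparr>)"
  proof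
    assume "subgroup_perfect_code L (G\<lparr>carrier := K\<rparr>)"
    then obtain T where TK: "T \<subseteq> K" and Tinv: "\<forall>t\<in>T. inv t \<in> T"
      and Tu: "\<forall>g\<in>K. \<exists>!t. t \<in> T \<and> t \<otimes> inv g \<in> L" using PK by blast
    have "\<forall>g\<in>H <#> K. \<exists>!t. t \<in> T \<and> t \<otimes> inv g \<in> H"
    proof
      fix g assume "g \<in> H <#> K"
      then obtain h k where hk: "h \<in> H" "k \<in> K" "g = h \<otimes> k" unfolding set_mult_def by blast
      have hc: "h \<in> carrier G" "k \<in> carrier G" using hk Hc Kc by auto
      have "\<exists>!t. t \<in> T \<and> t \<otimes> inv k \<in> L" using Tu hk(2) by blast
      then obtain t where t: "t \<in> T" "t \<otimes> inv k \<in> L" and tu: "\<And>t'. t' \<in> T \<Longrightarrow> t' \<otimes> inv k \<in> L \<Longrightarrow> t' = t"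
        by (elim ex1E) blast
      have tc: "t \<in> carrier G" using t TK Kc by auto
      show "\<exists>!t. t \<in> T \<and> t \<otimes> inv g \<in> H"
      proof (rule ex1I[of _ t])
        have "t \<otimes> inv g = (t \<otimes> inv k) \<otimes> inv h" unfolding hk(3) using tc hc by (simp add: gsimp)
        moreover have "(t \<otimes> inv k) \<otimes> inv h \<in> H"
          by (rule subgroup.m_closed[OF H _ subgroup.m_inv_closed[OF H hk(1)]]) (use t(2) in \<open>simp add: L_def\<close>)
        ultimately show "t \<in> T \<and> t \<otimes> inv g \<in> H" using t(1) by simp
        fix t' assume t': "t' \<in> T \<and> t' \<otimes> inv g \<in> H"
        have t'c: "t' \<in> carrier G" using t' TK Kc by auto
        have e: "t' \<otimes> inv k = (t' \<otimes> inv g) \<otimes> h" unfolding hk(3) using t'c hc by (simp add: gsimp)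
        have "(t' \<otimes> inv g) \<otimes> h \<in> H" by (rule subgroup.m_closed[OF H _ hk(1)]) (use t' in simp)
        then have "t' \<otimes> inv k \<in> H" by (simp only: e)
        moreover have "t' \<otimes> inv k \<in> K"
          by (rule subgroup.m_closed[OF K _ subgroup.m_inv_closed[OF K hk(2)]]) (use t' TK in auto)
        ultimately have "t' \<otimes> inv k \<in> L" by (simp add: L_def)
        then show "t' = t" using tu t' by simp
      qed
    qed
    moreover have "T \<subseteq> H <#> K" using TK KHK by auto
    ultimately have ex: "\<exists>T. T \<subseteq> H <#> K \<and> (\<forall>t\<in>T. inv t \<in> T) \<and> (\<forall>g\<in>H <#> K. \<exists>!t. t \<in> T \<and> t \<otimes> inv g \<in> H)"
      using Tinv by blast
    show "subgroup_perfect_code H (G\<lparr>carrier := H <#> K\<rparr>)"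
      by (rule PHK[THEN iffD2, OF conjI[OF H conjI[OF HHK ex]]])
  next
    assume "subgroup_perfect_code H (G\<lparr>carrier := H <#> K\<rparr>)"
    then obtain T where TC: "T \<subseteq> H <#> K" and Tinv: "\<forall>t\<in>T. inv t \<in> T"
      and Tu: "\<forall>g\<in>H <#> K. \<exists>!t. t \<in> T \<and> t \<otimes> inv g \<in> H" using PHK by blast
    define W where "W = rc G L ` K"
    have finK: "finite K" using fin Kc finite_subset by blast
    have finL: "finite L" using fin Lc finite_subset by blast
    have IW: "InvW L K W" unfolding InvW_def
    proof (intro ballI conjI impI)
      fix g assume g: "g \<in> K"
      have gc: "g \<in> carrier G" using g Kc by auto
      have igK: "inv g \<in> K" using subgroup.m_inv_closed[OF K g] .
      have a1: "cnt W (dcos G L g) = card ((\<lambda>l. rc G L (g \<otimes> l)) ` L)"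
        unfolding cnt_def W_def by (simp only: dc_cosets[OF Lsub K LK g])
      have a2: "cnt W (dcos G L (inv g)) = card ((\<lambda>l. rc G L (inv g \<otimes> l)) ` L)"
        unfolding cnt_def W_def by (simp only: dc_cosets[OF Lsub K LK igK])
      have b1: "card ((\<lambda>l. rc G L (g \<otimes> l)) ` L) * card (nJ G L g) = card L"
        by (rule dcount[OF Lsub gc finL])
      have b2: "card ((\<lambda>l. rc G L (inv g \<otimes> l)) ` L) * card (nJ G L (inv g)) = card L"
        by (rule dcount[OF Lsub inv_closed[OF gc] finL])
      have cN: "card (nJ G L g) = card (nJ G L (inv g))" by (rule card_nJ_inv[OF Lsub gc])
      have "\<one> \<in> nJ G L g" using subgroup.one_closed[OF Lsub] gc by (simp add: nJ_def)
      moreover have "finite (nJ G L g)" using finL by (simp add: nJ_def)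
      ultimately have pos: "card (nJ G L g) > 0" using card_gt_0_iff by blast
      have "card ((\<lambda>l. rc G L (g \<otimes> l)) ` L) * card (nJ G L g) = card ((\<lambda>l. rc G L (inv g \<otimes> l)) ` L) * card (nJ G L g)"
        using b1 b2 cN by simp
      then have "card ((\<lambda>l. rc G L (g \<otimes> l)) ` L) = card ((\<lambda>l. rc G L (inv g \<otimes> l)) ` L)"
        using pos by simp
      then show "cnt W (dcos G L g) = cnt W (dcos G L (inv g))"
        using a1 a2 by simp
      assume sg: "dcos G L g = dcos G L (inv g) \<and> odd (cnt W (dcos G L g))"
      show "\<exists>y\<in>dcos G L g. y \<otimes> y = \<one>"
      proof -
        have tp': "two_part (card H) = two_part (card L)" using tp by (simp add: L_def)
        have o: "odd (cnt (rc G L ` K) (dcos G L g))" using sg[THEN conjunct2] by (simp add: W_def)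
        show ?thesis by (rule loop_exists[OF fin H K HK L_def tp' TC Tinv Tu g sg[THEN conjunct1] o])
      qed
    qed
    obtain T' where T': "T' \<subseteq> \<Union>W" "\<forall>t\<in>T'. inv t \<in> T'" "\<forall>A\<in>W. \<exists>!t. t \<in> T' \<and> t \<in> A"
      using greedy[OF Lsub K LK finK _ IW] by (auto simp: W_def)
    have UW: "\<Union>W \<subseteq> K" using rc_subset[OF Lsub K LK] by (auto simp: W_def)
    have T'K: "T' \<subseteq> K" using T'(1) UW by auto
    have "\<forall>g\<in>K. \<exists>!t. t \<in> T' \<and> t \<otimes> inv g \<in> L"
    proof
      fix g assume g: "g \<in> K"
      have "rc G L g \<in> W" using g by (simp add: W_def)
      then have "\<exists>!t. t \<in> T' \<and> t \<in> rc G L g" using T'(3) by blast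
      moreover have eqv: "\<And>t. (t \<in> T' \<and> t \<in> rc G L g) = (t \<in> T' \<and> t \<otimes> inv g \<in> L)"
        using T'K Kc by (auto simp: rc_def)
      ultimately show "\<exists>!t. t \<in> T' \<and> t \<otimes> inv g \<in> L" by (simp only: eqv)
    qed
    then have ex: "\<exists>T. T \<subseteq> K \<and> (\<forall>t\<in>T. inv t \<in> T) \<and> (\<forall>g\<in>K. \<exists>!t. t \<in> T \<and> t \<otimes> inv g \<in> L)"
      using T'K T'(2) by blast
    show "subgroup_perfect_code L (G\<lparr>carrier := K\<rparr>)"
      by (rule PK[THEN iffD2, OF conjI[OF Lsub conjI[OF LK ex]]])
  qed
  then show ?thesis by (simp add: L_def)
qed

end

theorem lemma4p3:
  fixes G :: "('a, 'b) monoid_scheme" and H K :: "'a set"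
  assumes "group G" and "finite (carrier G)"
    and "subgroup H G" and "subgroup K G"
    and "subgroup (H <#>\<^bsub>G\<^esub> K) G"
    and "two_part (card H) = two_part (card (H \<inter> K))"
  shows "subgroup_perfect_code (H \<inter> K) (G\<lparr>carrier := K\<rparr>) \<longleftrightarrow>
         subgroup_perfect_code H (G\<lparr>carrier := H <#>\<^bsub>G\<^esub> K\<rparr>)"
  by (rule group.lemma4p3_aux[OF assms])


end
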